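(* Let $0\leq\varepsilon\leq 1$ and let $G$ be a graph with $n$ vertices and $m$ edges such that $t(G)\leq \varepsilon (m/n)^3$. Then \[ \mu_n(G)\leq -(1-\varepsilon)\frac{4m^2}{n^3}. \]
   Context: All graphs are finite, simple and undirected. $t(G)$ is the number of triangles in $G$. $\mu_n(G)$ denotes the smallest eigenvalue of the adjacency matrix of $G$. *)

theory Defs
  imports Complex_Main
begin

definition simple_graph :: "('a \<Rightarrow> 'a \<Rightarrow> bool) \<Rightarrow> bool" where
  "simple_graph E \<longleftrightarrow> (\<forall>u v. E u v \<longrightarrow> E v u) \<and> (\<forall>v. \<not> E v v)"

definition edges :: "('a \<Rightarrow> 'a \<Rightarrow> bool) \<Rightarrow> 'a set set" where
  "edges E = {{u, v} | u v. E u v}"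

definition num_edges :: "('a \<Rightarrow> 'a \<Rightarrow> bool) \<Rightarrow> nat" where
  "num_edges E = card (edges E)"

definition num_triangles :: "('a \<Rightarrow> 'a \<Rightarrow> bool) \<Rightarrow> nat" where
  "num_triangles E = card {T. card T = 3 \<and> (\<forall>u\<in>T. \<forall>v\<in>T. u \<noteq> v \<longrightarrow> E u v)}"

definition adj_matrix :: "('a \<Rightarrow> 'a \<Rightarrow> bool) \<Rightarrow> 'a \<Rightarrow> 'a \<Rightarrow> real" where
  "adj_matrix E u v = (if E u v then 1 else 0)"

definition adj_eigenvalues :: "('a::finite \<Rightarrow> 'a \<Rightarrow> bool) \<Rightarrow> real set" where
  "adj_eigenvalues E = {\<mu>. \<exists>x :: 'a \<Rightarrow> real. x \<noteq> (\<lambda>_. 0) \<and>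
      (\<forall>u. (\<Sum>v\<in>UNIV. adj_matrix E u v * x v) = \<mu> * x u)}"

definition min_eigenvalue :: "('a::finite \<Rightarrow> 'a \<Rightarrow> bool) \<Rightarrow> real" where
  "min_eigenvalue E = Min (adj_eigenvalues E)"

end

theory Submission
  imports Defs "HOL-Analysis.Analysis"
begin

definition qf :: "('a::finite \<Rightarrow> 'a \<Rightarrow> real) \<Rightarrow> ('a \<Rightarrow> real) \<Rightarrow> real" where
  "qf M x = (\<Sum>u\<in>UNIV. \<Sum>v\<in>UNIV. M u v * x u * x v)"
definition bf :: "('a::finite \<Rightarrow> 'a \<Rightarrow> real) \<Rightarrow> ('a \<Rightarrow> real) \<Rightarrow> ('a \<Rightarrow> real) \<Rightarrow> real" where
  "bf M x z = (\<Sum>u\<in>UNIV. \<Sum>v\<in>UNIV. M u v * x u * z v)"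
definition mv :: "('a::finite \<Rightarrow> 'a \<Rightarrow> real) \<Rightarrow> ('a \<Rightarrow> real) \<Rightarrow> 'a \<Rightarrow> real" where
  "mv M x = (\<lambda>u. \<Sum>v\<in>UNIV. M u v * x v)"
definition sq :: "('a::finite \<Rightarrow> real) \<Rightarrow> real" where
  "sq x = (\<Sum>u\<in>UNIV. (x u)^2)"
definition symm :: "('a \<Rightarrow> 'a \<Rightarrow> real) \<Rightarrow> bool" where
  "symm M \<longleftrightarrow> (\<forall>u v. M u v = M v u)"

lemma qf_bf: "qf M x = bf M x x" by (simp add: qf_def bf_def)

lemma bf_mv: "bf M x z = (\<Sum>u\<in>UNIV. x u * mv M z u)"
  by (simp add: bf_def mv_def sum_distrib_left mult.assoc mult.left_commute)

lemma bf_sym: assumes "symm M" shows "bf M x z = bf M z x"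
proof -
  have "bf M x z = (\<Sum>v\<in>UNIV. \<Sum>u\<in>UNIV. M u v * x u * z v)"
    unfolding bf_def by (rule sum.swap)
  also have "\<dots> = bf M z x" unfolding bf_def
    using assms unfolding symm_def by (intro sum.cong refl) (metis mult.commute mult.left_commute)
  finally show ?thesis .
qed

lemma qf_add: assumes "symm M"
  shows "qf M (\<lambda>u. f u + c * g u) = qf M f + 2*c*bf M f g + c^2 * qf M g"
proof -
  have e: "M u v * (f u + c*g u) * (f v + c*g v) = M u v * f u * f v + c * (M u v * f u * g v) + c*(M u v * g u * f v) + c^2 * (M u v * g u * g v)" for u v
    by (simp add: algebra_simps power2_eq_square)
  have "qf M (\<lambda>u. f u + c * g u) = qf M f + c * bf M f g + c * bf M g f + c^2 * qf M g"
    unfolding qf_def bf_def e by (simp add: sum.distrib sum_distrib_left)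
  then show ?thesis using bf_sym[OF assms, of g f] by simp
qed

lemma qf_scale: "qf M (\<lambda>u. a * z u) = a^2 * qf M z"
  unfolding qf_def by (simp add: sum_distrib_left power2_eq_square algebra_simps)

lemma qf_shift: "qf (\<lambda>u v. M u v - c * (if u = v then 1 else 0)) z = qf M z - c * sq z"
proof -
  have e: "(M u v - c * (if u = v then 1 else 0)) * z u * z v = M u v * z u * z v - (if u = v then c * z u * z v else 0)" for u v
    by (simp add: algebra_simps)
  show ?thesis unfolding qf_def sq_def e
    by (simp add: sum_subtractf sum_distrib_left power2_eq_square mult.assoc)
qed

lemma mv_shift: "mv (\<lambda>u v. M u v - c * (if u = v then 1 else 0)) z = (\<lambda>u. mv M z u - c * z u)"
proof -
  have e: "(M u v - c * (if u = v then 1 else 0)) * z v = M u v * z v - (if u = v then c * z v else 0)" for u v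
    by (simp add: algebra_simps)
  show ?thesis unfolding mv_def e
    by (simp add: sum_subtractf)
qed

lemma norm_sq: "norm (v::real^'a)^2 = sq (\<lambda>u. v$u)"
  unfolding power2_norm_eq_inner inner_vec_def sq_def by (simp add: power2_eq_square)

lemma sq_zero: "sq z = 0 \<Longrightarrow> z = (\<lambda>_. 0)"
  unfolding sq_def by (subst (asm) sum_nonneg_eq_0_iff) auto

lemma quad_zero: fixes b q :: real assumes "q \<ge> 0" "\<forall>t. 0 \<le> 2*t*b + t^2*q" shows "b = 0"
proof (rule ccontr)
  assume "b \<noteq> 0"
  define t where "t = - b / (q+1)"
  have "0 \<le> 2*t*b + t^2*q" using assms by auto
  also have "2*t*b + t^2*q = b^2 * (-q-2) / (q+1)^2"
  proof -
    have p: "q + 1 \<noteq> 0" using assms(1) by linarith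
    show ?thesis unfolding t_def power2_eq_square using p
      by (simp add: divide_simps) (simp add: algebra_simps)
  qed
  also have "\<dots> < 0" using \<open>b\<noteq>0\<close> assms(1)
    by (intro divide_neg_pos mult_pos_neg) auto
  finally show False by simp
qed

lemma variational:
  fixes M :: "'a::finite \<Rightarrow> 'a \<Rightarrow> real"
  assumes sym: "symm M"
  shows "\<exists>x c. sq x = 1 \<and> (\<forall>z. c * sq z \<le> qf M z) \<and> mv M x = (\<lambda>u. c * x u)"
proof -
  define F where "F = (\<lambda>v::real^'a. qf M (\<lambda>u. v$u))"
  have cont: "continuous_on (sphere 0 1) F"
    unfolding F_def qf_def by (intro continuous_intros)
  have ne: "sphere (0::real^'a) 1 \<noteq> {}" by simp
  obtain v where v: "v \<in> sphere (0::real^'a) 1" and vmin: "\<forall>w\<in>sphere 0 1. F v \<le> F w"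
    using continuous_attains_inf[OF compact_sphere ne cont] by blast
  define x where "x = (\<lambda>u. v$u)"
  define c where "c = qf M x"
  have sqx: "sq x = 1" using v norm_sq[of v] unfolding x_def by simp
  have ineq: "c * sq z \<le> qf M z" for z
  proof (cases "sq z = 0")
    case True
    then show ?thesis using sq_zero[OF True] by (simp add: qf_def)
  next
    case False
    define s where "s = sq z"
    have spos: "s > 0" using False unfolding s_def sq_def by (simp add: sum_nonneg order_le_neq_trans)
    define w :: "real^'a" where "w = (\<chi> u. z u / sqrt s)"
    have "norm w ^ 2 = sq (\<lambda>u. z u / sqrt s)" unfolding w_def norm_sq by (simp add: vec_lambda_inverse)
    also have "\<dots> = sq z / s" unfolding sq_def using spos
      by (simp add: power_divide sum_divide_distrib)
    also have "\<dots> = 1" using spos s_def by simp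
    finally have "norm w = 1" using real_sqrt_unique[OF _ norm_ge_zero, of w 1] by simp
    then have "F v \<le> F w" using vmin by simp
    moreover have "F w = qf M z / s"
    proof -
      have "F w = qf M (\<lambda>u. (1 / sqrt s) * z u)" unfolding F_def w_def by (simp add: vec_lambda_inverse)
      also have "\<dots> = qf M z / s" unfolding qf_scale using spos by (simp add: power_divide)
      finally show ?thesis .
    qed
    ultimately have "c \<le> qf M z / s" unfolding c_def F_def x_def by simp
    then show ?thesis using spos s_def by (simp add: pos_le_divide_eq)
  qed
  define B where "B = (\<lambda>u v. M u v - c * (if u = v then 1 else (0::real)))"
  have symB: "symm B" using sym unfolding symm_def B_def by auto
  have psd: "0 \<le> qf B z" for z unfolding B_def qf_shift using ineq[of z] by simp
  have qx0: "qf B x = 0" unfolding B_def qf_shift c_def sqx by simp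
  have b0: "bf B x g = 0" for g
  proof (rule quad_zero[OF psd[of g]], intro allI)
    fix t
    show "0 \<le> 2 * t * bf B x g + t\<^sup>2 * qf B g"
      using psd[of "\<lambda>u. x u + t * g u"] unfolding qf_add[OF symB] qx0 by simp
  qed
  have "bf B x (mv B x) = bf B (mv B x) x" by (rule bf_sym[OF symB])
  also have "\<dots> = sq (mv B x)" unfolding bf_mv sq_def by (simp add: power2_eq_square)
  finally have "bf B x (mv B x) = sq (mv B x)" .
  then have "mv B x = (\<lambda>_. 0)" using b0 sq_zero by metis
  then have "\<And>u. mv M x u - c * x u = 0" unfolding B_def mv_shift by (rule fun_cong)
  then have "mv M x = (\<lambda>u. c * x u)" by (intro ext) simp
  then show ?thesis using sqx ineq by blast
qed

lemma eig_finite: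
  fixes M :: "'a::finite \<Rightarrow> 'a \<Rightarrow> real"
  assumes sym: "symm M"
  shows "finite {c. \<exists>x. x \<noteq> (\<lambda>_. 0) \<and> mv M x = (\<lambda>u. c * x u)}" (is "finite ?S")
proof -
  define P where "P = (\<lambda>c x. x \<noteq> (\<lambda>_. 0) \<and> mv M x = (\<lambda>u. c * x u))"
  define ev where "ev = (\<lambda>c. SOME x. P c x)"
  define g where "g = (\<lambda>c. (\<chi> u. ev c u) :: real^'a)"
  have evP: "P c (ev c)" if "c \<in> ?S" for c
  proof -
    have "\<exists>x. P c x" using that unfolding P_def by simp
    then show ?thesis unfolding ev_def by (rule someI_ex)
  qed
  have gnth: "g c $ u = ev c u" for c u unfolding g_def by simp
  have orth: "(\<Sum>u\<in>UNIV. x1 u * x2 u) = 0" if "P c1 x1" "P c2 x2" "c1 \<noteq> c2" for c1 c2 x1 x2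
  proof -
    have "bf M x1 x2 = c2 * (\<Sum>u\<in>UNIV. x1 u * x2 u)"
      using that unfolding bf_mv P_def by (simp add: sum_distrib_left algebra_simps)
    moreover have "bf M x2 x1 = c1 * (\<Sum>u\<in>UNIV. x1 u * x2 u)"
      using that unfolding bf_mv P_def by (simp add: sum_distrib_left algebra_simps)
    ultimately have "(c1 - c2) * (\<Sum>u\<in>UNIV. x1 u * x2 u) = 0"
      using bf_sym[OF sym, of x1 x2] by (simp add: algebra_simps)
    then show ?thesis using that(3) by simp
  qed
  have inj: "inj_on g ?S"
  proof (rule inj_onI)
    fix c1 c2 assume c1: "c1 \<in> ?S" and c2: "c2 \<in> ?S" and eq: "g c1 = g c2"
    have e: "ev c1 = ev c2"
    proof
      fix u show "ev c1 u = ev c2 u" using gnth[of c1 u] gnth[of c2 u] eq by simp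
    qed
    obtain u where u: "ev c1 u \<noteq> 0" using evP[OF c1] unfolding P_def by auto
    have h1: "mv M (ev c1) u = c1 * ev c1 u" using evP[OF c1] unfolding P_def by simp
    have h2: "mv M (ev c2) u = c2 * ev c2 u" using evP[OF c2] unfolding P_def by simp
    have "c1 * ev c1 u = c2 * ev c1 u" using h1 h2 e by (metis)
    then show "c1 = c2" using u by simp
  qed
  have "pairwise orthogonal (g ` ?S)"
    unfolding pairwise_def orthogonal_def
  proof (intro ballI impI)
    fix a b assume a: "a \<in> g ` ?S" and b: "b \<in> g ` ?S" and ne: "a \<noteq> b"
    obtain c1 where c1: "c1 \<in> ?S" "a = g c1" using a by blast
    obtain c2 where c2: "c2 \<in> ?S" "b = g c2" using b by blast
    have "c1 \<noteq> c2" using ne c1 c2 by auto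
    then show "a \<bullet> b = 0" unfolding c1(2) c2(2) inner_vec_def gnth
      using orth[OF evP[OF c1(1)] evP[OF c2(1)]] by simp
  qed
  moreover have "0 \<notin> g ` ?S"
  proof
    assume "0 \<in> g ` ?S"
    then obtain c where c: "c \<in> ?S" "g c = 0" by (metis (no_types, lifting) imageE)
    then have "ev c = (\<lambda>_. 0)"
    proof -
      have "ev c u = 0" for u using gnth[of c u] c(2) by simp
      then show ?thesis by auto
    qed
    then show False using evP[OF c(1)] unfolding P_def by simp
  qed
  ultimately have "independent (g ` ?S)" by (rule pairwise_orthogonal_independent)
  then have "finite (g ` ?S)" using independent_bound by blast
  then show ?thesis using finite_imageD inj by blast
qed

lemma sum2_card: fixes P :: "'a::finite \<Rightarrow> 'a \<Rightarrow> bool"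
  shows "(\<Sum>u\<in>UNIV. \<Sum>v\<in>UNIV. (of_bool (P u v)::real)) = real (card {(u,v). P u v})"
proof -
  have "(\<Sum>u\<in>UNIV. \<Sum>v\<in>UNIV. (of_bool (P u v)::real)) = (\<Sum>(u,v)\<in>UNIV \<times> UNIV. (of_bool (P u v)::real))"
    by (rule sum.cartesian_product)
  also have "\<dots> = (\<Sum>p\<in>UNIV. (of_bool (p \<in> {(u,v). P u v})::real))"
    by (simp add: split_beta)
  also have "\<dots> = real (card {(u,v). P u v})" by simp
  finally show ?thesis .
qed

lemma sum_pair: "(\<Sum>v\<in>(UNIV::'b::finite set). \<Sum>w\<in>(UNIV::'c::finite set). (h v w :: real)) = (\<Sum>q\<in>UNIV. h (fst q) (snd q))"
  by (simp only: sum.cartesian_product UNIV_Times_UNIV case_prod_unfold)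

lemma sum3_card: fixes P :: "'a::finite \<Rightarrow> 'a \<Rightarrow> 'a \<Rightarrow> bool"
  shows "(\<Sum>u\<in>UNIV. \<Sum>v\<in>UNIV. \<Sum>w\<in>UNIV. (of_bool (P u v w)::real)) = real (card {(u,v,w). P u v w})"
proof -
  have "(\<Sum>u\<in>UNIV. \<Sum>v\<in>UNIV. \<Sum>w\<in>UNIV. (of_bool (P u v w)::real)) = (\<Sum>u\<in>UNIV. \<Sum>q\<in>UNIV. (of_bool (P u (fst q) (snd q))::real))"
    by (intro sum.cong refl sum_pair)
  also have "\<dots> = (\<Sum>p\<in>UNIV. (of_bool (P (fst p) (fst (snd p)) (snd (snd p)))::real))"
    by (rule sum_pair)
  also have "\<dots> = (\<Sum>p\<in>UNIV. (of_bool (p \<in> {(u,v,w). P u v w})::real))"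
    by (simp add: split_beta)
  also have "\<dots> = real (card {(u,v,w). P u v w})" by simp
  finally show ?thesis .
qed

lemma edges_count:
  fixes E :: "'a::finite \<Rightarrow> 'a \<Rightarrow> bool"
  assumes sg: "simple_graph E"
  shows "card {(u,v). E u v} = 2 * num_edges E"
proof -
  have sym: "E u v \<Longrightarrow> E v u" and irr: "\<not> E v v" for u v using sg unfolding simple_graph_def by auto
  define A where "A = (\<lambda>e. {(u,v). E u v \<and> {u,v} = e})"
  have U: "{(u,v). E u v} = (\<Union>e\<in>edges E. A e)"
    unfolding A_def edges_def by auto
  have c2: "card (A e) = 2" if ein: "e \<in> edges E" for e
  proof -
    obtain a b where e: "e = {a,b}" "E a b" using ein unfolding edges_def by auto
    have ab: "a \<noteq> b" using e irr by auto
    have "A e = {(a,b),(b,a)}"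
      unfolding A_def e using ab e(2) sym by (auto simp: doubleton_eq_iff)
    then show ?thesis using ab by simp
  qed
  have "card {(u,v). E u v} = (\<Sum>e\<in>edges E. card (A e))"
    unfolding U by (rule card_UN_disjoint) (auto simp: A_def)
  also have "\<dots> = 2 * num_edges E" using c2 by (simp add: num_edges_def)
  finally show ?thesis .
qed

lemma tri_count:
  fixes E :: "'a::finite \<Rightarrow> 'a \<Rightarrow> bool"
  assumes sg: "simple_graph E"
  shows "card {(u,v,w). E u v \<and> E v w \<and> E w u} = 6 * num_triangles E"
proof -
  have sym: "E u v \<Longrightarrow> E v u" and irr: "\<not> E v v" for u v using sg unfolding simple_graph_def by auto
  define TS where "TS = {T. card T = 3 \<and> (\<forall>u\<in>T. \<forall>v\<in>T. u \<noteq> v \<longrightarrow> E u v)}"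
  define A where "A = (\<lambda>T. {(u,v,w). E u v \<and> E v w \<and> E w u \<and> {u,v,w} = T})"
  have U: "{(u,v,w). E u v \<and> E v w \<and> E w u} = (\<Union>T\<in>TS. A T)"
  proof (intro equalityI subsetI)
    fix p assume "p \<in> {(u,v,w). E u v \<and> E v w \<and> E w u}"
    then obtain u v w where p: "p = (u,v,w)" "E u v" "E v w" "E w u" by auto
    have d: "u \<noteq> v" "v \<noteq> w" "u \<noteq> w" using p irr by metis+
    have "{u,v,w} \<in> TS" unfolding TS_def using d p sym by (auto simp: card_insert_if)
    then show "p \<in> (\<Union>T\<in>TS. A T)" unfolding A_def using p by blast
  next
    fix p assume "p \<in> (\<Union>T\<in>TS. A T)"
    then show "p \<in> {(u,v,w). E u v \<and> E v w \<and> E w u}" unfolding A_def by auto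
  qed
  have c6: "card (A T) = 6" if Tin: "T \<in> TS" for T
  proof -
    obtain a b c where T: "T = {a,b,c}" "a \<noteq> b" "b \<noteq> c" "a \<noteq> c"
      using Tin unfolding TS_def card_3_iff by auto
    have adj: "E a b" "E b c" "E c a" "E b a" "E c b" "E a c" using Tin T unfolding TS_def by auto
    have "A T = {(a,b,c),(a,c,b),(b,a,c),(b,c,a),(c,a,b),(c,b,a)}"
    proof (intro equalityI subsetI)
      fix p assume "p \<in> A T"
      then obtain u v w where p: "p = (u,v,w)" "E u v" "E v w" "E w u" "{u,v,w} = {a,b,c}"
        unfolding A_def T by auto
      have d: "u \<noteq> v" "v \<noteq> w" "u \<noteq> w" using p irr by metis+
      have m: "u \<in> {a,b,c}" "v \<in> {a,b,c}" "w \<in> {a,b,c}" using p(5) by blast+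
      show "p \<in> {(a,b,c),(a,c,b),(b,a,c),(b,c,a),(c,a,b),(c,b,a)}"
        using m d p(1) by auto
    next
      fix p assume "p \<in> {(a,b,c),(a,c,b),(b,a,c),(b,c,a),(c,a,b),(c,b,a)}"
      then show "p \<in> A T" unfolding A_def T using adj by auto
    qed
    then show ?thesis using T by simp
  qed
  have fin: "finite TS" by simp
  have "card {(u,v,w). E u v \<and> E v w \<and> E w u} = (\<Sum>T\<in>TS. card (A T))"
    unfolding U by (rule card_UN_disjoint) (auto simp: A_def)
  also have "\<dots> = 6 * num_triangles E" using c6 by (simp add: num_triangles_def TS_def)
  finally show ?thesis .
qed

lemma final_arith:
  fixes m n t \<epsilon> \<mu> \<nu> :: real
  assumes n: "n > 0" and m: "m \<ge> 0" and mu: "\<mu> \<le> 0" and nu: "\<nu> * n \<ge> 2 * m"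
    and e0: "0 \<le> \<epsilon>" and e1: "\<epsilon> \<le> 1" and t: "t \<le> \<epsilon> * (m / n) ^ 3"
    and key: "6 * t - 2 * m * \<mu> \<ge> \<nu>^2 * (\<nu> - \<mu>)"
  shows "\<mu> \<le> - (1 - \<epsilon>) * (4 * m ^ 2 / n ^ 3)"
proof -
  define D where "D = 2 * m / n"
  have D0: "D \<ge> 0" using m n unfolding D_def by simp
  have nuD: "\<nu> \<ge> D" using nu n unfolding D_def by (simp add: pos_divide_le_eq)
  have mD: "m = D * n / 2" using n unfolding D_def by simp
  have h1: "\<nu>^2 * (\<nu> - \<mu>) \<ge> D^2 * (D - \<mu>)"
    by (rule mult_mono) (use nuD D0 mu in \<open>auto intro: power_mono\<close>)
  have h2: "D^2 * (D - \<mu>) \<ge> D^3"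
  proof -
    have "D^2 * (-\<mu>) \<ge> 0" using mu by (simp add: mult_nonneg_nonpos2 zero_le_power2 mult_le_0_iff)
    then show ?thesis by (simp add: algebra_simps power3_eq_cube power2_eq_square)
  qed
  have h3: "(m / n)^3 = D^3 / 8" unfolding D_def by (simp add: power_divide power_mult_distrib)
  have h4: "6 * t \<le> 6 * \<epsilon> * D^3 / 8" using t h3 by simp
  have h5: "\<epsilon> * D^3 \<ge> 0" using e0 D0 by simp
  have "- 2 * m * \<mu> \<ge> (1 - \<epsilon>) * D^3" using key h1 h2 h4 h5 by (simp add: algebra_simps)
  then have h6: "D * n * (-\<mu>) \<ge> (1 - \<epsilon>) * D^3" unfolding mD by (simp add: algebra_simps)
  show ?thesis
  proof (cases "D = 0")
    case True
    then have "m = 0" using mD by simp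
    then show ?thesis using mu by simp
  next
    case False
    then have Dp: "D > 0" using D0 by simp
    have "n * (-\<mu>) \<ge> (1 - \<epsilon>) * D^2"
    proof -
      have "D * (n * (-\<mu>)) \<ge> D * ((1 - \<epsilon>) * D^2)" using h6 by (simp add: power3_eq_cube power2_eq_square algebra_simps)
      then show ?thesis using Dp mult_le_cancel_left_pos[OF Dp, of "(1 - \<epsilon>) * D^2" "n * (-\<mu>)"] by linarith
    qed
    then have "-\<mu> \<ge> (1 - \<epsilon>) * D^2 / n" using n by (simp add: divide_le_eq mult.commute)
    moreover have "(1 - \<epsilon>) * D^2 / n = (1 - \<epsilon>) * (4 * m ^ 2 / n ^ 3)"
      unfolding D_def using n by (simp add: power_divide power_mult_distrib field_simps power2_eq_square power3_eq_cube)
    ultimately have "-\<mu> \<ge> (1 - \<epsilon>) * (4 * m ^ 2 / n ^ 3)" by linarith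
    then show ?thesis by linarith
  qed
qed

theorem corollary4:
  fixes E :: "'a::finite \<Rightarrow> 'a \<Rightarrow> bool" and \<epsilon> :: real
  assumes "simple_graph E"
    and "0 \<le> \<epsilon>" and "\<epsilon> \<le> 1"
    and "real (num_triangles E) \<le> \<epsilon> * (real (num_edges E) / real (card (UNIV :: 'a set))) ^ 3"
  shows "min_eigenvalue E \<le> - (1 - \<epsilon>) * (4 * real (num_edges E) ^ 2 / real (card (UNIV :: 'a set)) ^ 3)"
proof -
  note sg = assms(1)
  define A where "A = adj_matrix E"
  define n where "n = real (card (UNIV :: 'a set))"
  define m where "m = real (num_edges E)"
  define t where "t = real (num_triangles E)"
  have symE: "E u v \<Longrightarrow> E v u" and irr: "\<not> E v v" for u v using sg unfolding simple_graph_def by auto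
  have Ab: "A u v = of_bool (E u v)" for u v unfolding A_def adj_matrix_def by simp
  have Esym: "E u v = E v u" for u v using symE by blast
  have symA: "symm A" unfolding symm_def Ab using Esym by simp
  have Auu: "A u u = 0" for u using irr Ab by simp
  have A2: "A u v * A u v = A u v" for u v unfolding Ab by simp
  have sumA: "(\<Sum>u\<in>UNIV. \<Sum>v\<in>UNIV. A u v) = 2 * m"
    unfolding Ab sum2_card m_def using edges_count[OF sg] by simp
  have sum3A: "(\<Sum>u\<in>UNIV. \<Sum>v\<in>UNIV. \<Sum>w\<in>UNIV. A u v * A v w * A w u) = 6 * t"
  proof -
    have "A u v * A v w * A w u = of_bool (E u v \<and> E v w \<and> E w u)" for u v w
      unfolding Ab by simp
    then have "(\<Sum>u\<in>UNIV. \<Sum>v\<in>UNIV. \<Sum>w\<in>UNIV. A u v * A v w * A w u) = real (card {(u,v,w). E u v \<and> E v w \<and> E w u})"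
      using sum3_card[of "\<lambda>u v w. E u v \<and> E v w \<and> E w u"] by simp
    then show ?thesis using tri_count[OF sg] unfolding t_def by simp
  qed
  have npos: "n > 0" unfolding n_def by simp
  obtain x \<mu> where sqx: "sq x = 1" and mumin: "\<forall>z. \<mu> * sq z \<le> qf A z" and xeig: "mv A x = (\<lambda>u. \<mu> * x u)"
    using variational[OF symA] by blast
  have symnA: "symm (\<lambda>u v. - A u v)" using symA unfolding symm_def by simp
  obtain y c where sqy: "sq y = 1" and cmin: "\<forall>z. c * sq z \<le> qf (\<lambda>u v. - A u v) z"
      and yeig: "mv (\<lambda>u v. - A u v) y = (\<lambda>u. c * y u)"
    using variational[OF symnA] by blast
  define \<nu> where "\<nu> = - c"
  have qfneg: "qf (\<lambda>u v. - A u v) z = - qf A z" for z unfolding qf_def by (simp add: sum_negf)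
  have mvneg: "mv (\<lambda>u v. - A u v) z = (\<lambda>u. - mv A z u)" for z unfolding mv_def by (simp add: sum_negf)
  have numax: "qf A z \<le> \<nu> * sq z" for z
  proof -
    have "c * sq z \<le> - qf A z" using cmin[rule_format, of z] qfneg[of z] by linarith
    then show ?thesis unfolding \<nu>_def by (simp add: algebra_simps)
  qed
  have yeig': "mv A y = (\<lambda>u. \<nu> * y u)"
  proof
    fix u show "mv A y u = \<nu> * y u" using fun_cong[OF yeig, of u] mvneg[of y] unfolding \<nu>_def by simp
  qed
  have mu0: "\<mu> \<le> 0"
  proof -
    define u0 :: 'a where "u0 = undefined"
    define z :: "'a \<Rightarrow> real" where "z = (\<lambda>v. if v = u0 then 1 else 0)"
    have z2: "(z v)^2 = z v" for v by (simp add: z_def)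
    have "sq z = 1" unfolding sq_def z2 by (simp add: z_def)
    moreover have z0: "A u v * z u * z v = 0" for u v by (auto simp: z_def Auu)
    have "qf A z = 0" unfolding qf_def z0 by simp
    ultimately show ?thesis using mumin[rule_format, of z] by simp
  qed
  have nu2m: "\<nu> * n \<ge> 2 * m"
  proof -
    define o1 :: "'a \<Rightarrow> real" where "o1 = (\<lambda>_. 1)"
    have "qf A o1 = 2 * m" unfolding qf_def o1_def using sumA by simp
    moreover have "sq o1 = n" unfolding sq_def n_def o1_def by simp
    ultimately show ?thesis using numax[of o1] by (simp add: mult.commute)
  qed
  have qfy: "qf A y = \<nu>"
  proof -
    have "qf A y = (\<Sum>u\<in>UNIV. y u * (\<nu> * y u))" unfolding qf_bf bf_mv yeig' ..
    also have "\<dots> = \<nu> * sq y" unfolding sq_def by (simp add: sum_distrib_left power2_eq_square algebra_simps)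
    finally show ?thesis using sqy by simp
  qed
  define B where "B = (\<lambda>u v. A u v - \<mu> * (if u = v then 1 else (0::real)))"
  have symB: "symm B" using symA unfolding symm_def B_def by auto
  have psd: "0 \<le> qf B z" for z unfolding B_def qf_shift using mumin by (simp add: algebra_simps)
  have mvBy: "mv B y = (\<lambda>u. (\<nu> - \<mu>) * y u)" unfolding B_def mv_shift yeig' by (simp add: algebra_simps)
  have qfBy: "qf B y = \<nu> - \<mu>" unfolding B_def qf_shift qfy sqy by simp
  define col where "col = (\<lambda>u v. A v u)"
  have S_eq: "(\<Sum>u\<in>UNIV. qf B (col u)) = 6 * t - 2 * m * \<mu>"
  proof -
    have "qf B (col u) = qf A (col u) - \<mu> * sq (col u)" for u unfolding B_def qf_shift ..
    then have "(\<Sum>u\<in>UNIV. qf B (col u)) = (\<Sum>u\<in>UNIV. qf A (col u)) - \<mu> * (\<Sum>u\<in>UNIV. sq (col u))"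
      by (simp add: sum_subtractf sum_distrib_left)
    moreover have "(\<Sum>u\<in>UNIV. qf A (col u)) = 6 * t"
    proof -
      have r: "A v w * col u v * col u w = A u v * A v w * A w u" for u v w
        unfolding col_def using symA unfolding symm_def by (metis mult.commute mult.left_commute)
      show ?thesis unfolding qf_def r using sum3A by simp
    qed
    moreover have "(\<Sum>u\<in>UNIV. sq (col u)) = 2 * m"
    proof -
      have r: "(col u v)^2 = A u v" for u v
        unfolding col_def power2_eq_square A2 using symA unfolding symm_def by (metis A2)
      show ?thesis unfolding sq_def r using sumA by simp
    qed
    ultimately show ?thesis by simp
  qed
  have per_u: "qf B (col u) \<ge> \<nu>^2 * (y u)^2 * (\<nu> - \<mu>)" for u
  proof -
    define w where "w = (\<lambda>v. A v u - \<nu> * y u * y v)"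
    have cw: "col u = (\<lambda>v. w v + (\<nu> * y u) * y v)" unfolding w_def col_def by simp
    have "(\<Sum>v\<in>UNIV. w v * y v) = mv A y u - \<nu> * y u * sq y"
    proof -
      have "(\<Sum>v\<in>UNIV. w v * y v) = (\<Sum>v\<in>UNIV. A u v * y v) - \<nu> * y u * (\<Sum>v\<in>UNIV. y v ^ 2)"
        unfolding w_def using symA unfolding symm_def
        by (simp add: algebra_simps sum_subtractf sum_distrib_left power2_eq_square)
      then show ?thesis unfolding mv_def sq_def by simp
    qed
    then have wy0: "(\<Sum>v\<in>UNIV. w v * y v) = 0" using yeig' sqy by simp
    have "bf B w y = (\<Sum>v\<in>UNIV. w v * ((\<nu> - \<mu>) * y v))" unfolding bf_mv mvBy ..
    also have "\<dots> = (\<nu> - \<mu>) * (\<Sum>v\<in>UNIV. w v * y v)" by (simp add: sum_distrib_left algebra_simps)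
    finally have bf0: "bf B w y = 0" using wy0 by simp
    have "qf B (col u) = qf B w + (\<nu> * y u)^2 * qf B y"
      unfolding cw qf_add[OF symB] bf0 by simp
    also have "\<dots> \<ge> (\<nu> * y u)^2 * qf B y" using psd[of w] by simp
    finally show ?thesis unfolding qfBy by (simp add: power_mult_distrib)
  qed
  have "(\<Sum>u\<in>UNIV. qf B (col u)) \<ge> (\<Sum>u\<in>UNIV. \<nu>^2 * (y u)^2 * (\<nu> - \<mu>))"
    by (rule sum_mono) (rule per_u)
  also have "(\<Sum>u\<in>UNIV. \<nu>^2 * (y u)^2 * (\<nu> - \<mu>)) = \<nu>^2 * (\<nu> - \<mu>)"
  proof -
    have "(\<Sum>u\<in>UNIV. \<nu>^2 * (y u)^2 * (\<nu> - \<mu>)) = (\<nu>^2 * (\<nu> - \<mu>)) * sq y"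
      unfolding sq_def by (simp add: sum_distrib_left sum_subtractf algebra_simps)
    then show ?thesis using sqy by simp
  qed
  finally have key: "6 * t - 2 * m * \<mu> \<ge> \<nu>^2 * (\<nu> - \<mu>)" using S_eq by simp
  have bound: "\<mu> \<le> - (1 - \<epsilon>) * (4 * m ^ 2 / n ^ 3)"
    by (rule final_arith[OF npos _ mu0 nu2m assms(2) assms(3) _ key])
       (use assms(4) in \<open>simp_all add: m_def n_def t_def\<close>)
  have ES: "adj_eigenvalues E = {c. \<exists>x. x \<noteq> (\<lambda>_. 0) \<and> mv A x = (\<lambda>u. c * x u)}"
    unfolding adj_eigenvalues_def mv_def A_def by (simp add: fun_eq_iff)
  have fin: "finite (adj_eigenvalues E)" unfolding ES by (rule eig_finite[OF symA])
  have xne: "x \<noteq> (\<lambda>_. 0)" using sqx unfolding sq_def by auto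
  have mem: "\<mu> \<in> adj_eigenvalues E" unfolding ES using xne xeig by blast
  have low: "\<mu> \<le> c'" if cin: "c' \<in> adj_eigenvalues E" for c'
  proof -
    obtain z where z: "z \<noteq> (\<lambda>_. 0)" "mv A z = (\<lambda>u. c' * z u)" using cin unfolding ES by blast
    have "qf A z = (\<Sum>u\<in>UNIV. z u * (c' * z u))" unfolding qf_bf bf_mv z(2) ..
    also have "\<dots> = c' * sq z" unfolding sq_def by (simp add: sum_distrib_left power2_eq_square algebra_simps)
    finally have "qf A z = c' * sq z" .
    moreover have "sq z > 0"
    proof -
      have "sq z \<ge> 0" unfolding sq_def by (simp add: sum_nonneg)
      moreover have "sq z \<noteq> 0" using sq_zero z(1) by blast
      ultimately show ?thesis by simp
    qed
    ultimately show ?thesis using mumin by (metis mult_right_le_imp_le mult.commute)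
  qed
  have "min_eigenvalue E = \<mu>" unfolding min_eigenvalue_def
    by (rule Min_eqI[OF fin]) (use low mem in auto)
  then show ?thesis using bound unfolding m_def n_def by simp
qed

end
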